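(* Let $\mathfrak{g}$ be a three-dimensional Lie algebra, and fix a basis of $\mathfrak{g}$ (identifying $\mathfrak{g}\cong\mathbb{R}^3$). Let \[ F := \left\{ \begin{pmatrix} x_{11} & 0 & 0 \\ x_{21} & x_{22} & 0 \\ x_{31} & 0 & x_{22} \end{pmatrix} \;\middle|\; x_{11}, x_{22} > 0 \right\}. \] If $F \subset \mathbb{R}^\times \mathrm{Aut}(\mathfrak{g})$, then \[ L' := \left\{ \begin{pmatrix} 1 & 0 & 0 \\ 0 & 1 & 0 \\ 0 & a_{32} & a_{33} \end{pmatrix} \;\middle|\; a_{33} > 0 \right\} \] is a set of representatives of $\mathfrak{PM}$, i.e. $\mathfrak{PM} = \{ [h.\langle\cdot,\cdot\rangle_0] \mid h \in L' \}$.
   Context: $\mathbb{R}^\times$ denotes the nonzero scalar maps on $\mathfrak{g}$ and $\mathrm{Aut}(\mathfrak{g})$ the automorphism group. $\mathrm{GL}_3(\mathbb{R})$ acts on inner products by $g.\langle\cdot,\cdot\rangle := \langle g^{-1}\cdot, g^{-1}\cdot\rangle$; $\langle\cdot,\cdot\rangle_0$ is the inner product making the canonical basis $\{e_1,e_2,e_3\}$ orthonormal. Two inner products are isometric up to scaling if $\langle\cdot,\cdot\rangle_1 = k\langle f\cdot, f\cdot\rangle_2$ for some $k>0$ and automorphism $f$; $[\cdot]$ denotes the equivalence class, and $\mathfrak{PM}$ is the set of all equivalence classes of inner products on $\mathfrak{g}$ (the moduli space of left-invariant Riemannian metrics). *)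

theory Defs
  imports "HOL-Analysis.Analysis"
begin

type_synonym vec3 = "real^3"
type_synonym mat3 = "real^3^3"

definition lie_bracket :: "(vec3 \<Rightarrow> vec3 \<Rightarrow> vec3) \<Rightarrow> bool" where
  "lie_bracket br \<longleftrightarrow>
     (\<forall>z. linear (\<lambda>x. br x z)) \<and> (\<forall>x. linear (br x)) \<and>
     (\<forall>x. br x x = 0) \<and>
     (\<forall>x y z. br x (br y z) + br y (br z x) + br z (br x y) = 0)"

definition lie_aut :: "(vec3 \<Rightarrow> vec3 \<Rightarrow> vec3) \<Rightarrow> mat3 set" where
  "lie_aut br = {f. invertible f \<and> (\<forall>x y. f *v br x y = br (f *v x) (f *v y))}"

definition scal_aut :: "(vec3 \<Rightarrow> vec3 \<Rightarrow> vec3) \<Rightarrow> mat3 set" where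
  "scal_aut br = {c *\<^sub>R f | c f. c \<noteq> 0 \<and> f \<in> lie_aut br}"

definition inner_prod :: "(vec3 \<Rightarrow> vec3 \<Rightarrow> real) \<Rightarrow> bool" where
  "inner_prod ip \<longleftrightarrow> bilinear ip \<and> (\<forall>x y. ip x y = ip y x) \<and> (\<forall>x. x \<noteq> 0 \<longrightarrow> ip x x > 0)"

definition act :: "mat3 \<Rightarrow> (vec3 \<Rightarrow> vec3 \<Rightarrow> real) \<Rightarrow> (vec3 \<Rightarrow> vec3 \<Rightarrow> real)" where
  "act g ip = (\<lambda>x y. ip (matrix_inv g *v x) (matrix_inv g *v y))"

definition ip0 :: "vec3 \<Rightarrow> vec3 \<Rightarrow> real" where
  "ip0 = (\<lambda>x y. x \<bullet> y)"

definition iso_scal :: "(vec3 \<Rightarrow> vec3 \<Rightarrow> vec3) \<Rightarrow> (vec3 \<Rightarrow> vec3 \<Rightarrow> real) \<Rightarrow> (vec3 \<Rightarrow> vec3 \<Rightarrow> real) \<Rightarrow> bool" where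
  "iso_scal br ip1 ip2 \<longleftrightarrow>
     (\<exists>k>0. \<exists>f\<in>lie_aut br. \<forall>x y. ip1 x y = k * ip2 (f *v x) (f *v y))"

definition ip_class :: "(vec3 \<Rightarrow> vec3 \<Rightarrow> vec3) \<Rightarrow> (vec3 \<Rightarrow> vec3 \<Rightarrow> real) \<Rightarrow> (vec3 \<Rightarrow> vec3 \<Rightarrow> real) set" where
  "ip_class br ip = {ip'. inner_prod ip' \<and> iso_scal br ip' ip}"

definition PM :: "(vec3 \<Rightarrow> vec3 \<Rightarrow> vec3) \<Rightarrow> (vec3 \<Rightarrow> vec3 \<Rightarrow> real) set set" where
  "PM br = {ip_class br ip | ip. inner_prod ip}"

definition setF :: "mat3 set" where
  "setF = {vector [vector [x11, 0, 0], vector [x21, x22, 0], vector [x31, 0, x22]]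
           | x11 x21 x22 x31. x11 > 0 \<and> x22 > 0}"

definition setL' :: "mat3 set" where
  "setL' = {vector [vector [1, 0, 0], vector [0, 1, 0], vector [0, a32, a33]]
           | a32 a33. a33 > 0}"

end

theory Submission
  imports Defs
begin

lemma minv_props:
  fixes A :: "real^3^3"
  assumes "invertible A"
  shows "A ** matrix_inv A = mat 1 \<and> matrix_inv A ** A = mat 1"
  using assms unfolding invertible_def matrix_inv_def by (rule someI_ex)

lemma minv_unique:
  fixes A B :: "real^3^3"
  assumes "A ** B = mat 1" "B ** A = mat 1"
  shows "matrix_inv A = B"
proof -
  have inv: "invertible A" using assms unfolding invertible_def by blast
  let ?C = "matrix_inv A"
  have "?C = ?C ** (A ** B)" using assms by simp
  also have "\<dots> = (?C ** A) ** B" by (simp add: matrix_mul_assoc)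
  also have "\<dots> = B" using minv_props[OF inv] by simp
  finally show ?thesis .
qed

lemma aut_inv:
  assumes "f \<in> lie_aut br"
  shows "matrix_inv f \<in> lie_aut br"
proof -
  have inv: "invertible f" using assms by (simp add: lie_aut_def)
  note mp = minv_props[OF inv]
  let ?g = "matrix_inv f"
  have ginv: "invertible ?g" using mp unfolding invertible_def by blast
  have hom: "\<And>x y. f *v br x y = br (f *v x) (f *v y)" using assms by (simp add: lie_aut_def)
  have "?g *v br x y = br (?g *v x) (?g *v y)" for x y
  proof -
    have "br x y = br (f *v (?g *v x)) (f *v (?g *v y))"
      by (simp add: matrix_vector_mul_assoc mp)
    also have "\<dots> = f *v br (?g *v x) (?g *v y)" by (simp add: hom)
    finally have "?g *v br x y = ?g *v (f *v br (?g *v x) (?g *v y))" by simp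
    also have "\<dots> = br (?g *v x) (?g *v y)" by (simp add: matrix_vector_mul_assoc mp)
    finally show ?thesis .
  qed
  then show ?thesis using ginv by (simp add: lie_aut_def)
qed

lemma aut_mult:
  assumes "f \<in> lie_aut br" "g \<in> lie_aut br"
  shows "f ** g \<in> lie_aut br"
proof -
  have "invertible f" "invertible g" using assms by (auto simp: lie_aut_def)
  then have "invertible (f ** g)"
    unfolding invertible_def
    by (metis matrix_mul_assoc matrix_mul_lid)
  moreover have "(f ** g) *v br x y = br ((f ** g) *v x) ((f ** g) *v y)" for x y
    using assms by (simp add: lie_aut_def flip: matrix_vector_mul_assoc)
  ultimately show ?thesis by (simp add: lie_aut_def)
qed

lemma iso_sym:
  assumes "iso_scal br ip1 ip2"
  shows "iso_scal br ip2 ip1"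
proof -
  obtain k f where k: "k > 0" and f: "f \<in> lie_aut br" and e: "\<And>x y. ip1 x y = k * ip2 (f *v x) (f *v y)"
    using assms unfolding iso_scal_def by blast
  have inv: "invertible f" using f by (simp add: lie_aut_def)
  note mp = minv_props[OF inv]
  have "ip2 x y = (1/k) * ip1 (matrix_inv f *v x) (matrix_inv f *v y)" for x y
    using k by (simp add: e matrix_vector_mul_assoc mp)
  then show ?thesis unfolding iso_scal_def using k aut_inv[OF f]
    by (intro exI[of _ "1/k"]) auto
qed

lemma iso_trans:
  assumes "iso_scal br ip1 ip2" "iso_scal br ip2 ip3"
  shows "iso_scal br ip1 ip3"
proof -
  obtain k f where k: "k > 0" and f: "f \<in> lie_aut br" and e: "\<And>x y. ip1 x y = k * ip2 (f *v x) (f *v y)"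
    using assms(1) unfolding iso_scal_def by blast
  obtain k' g where k': "k' > 0" and g: "g \<in> lie_aut br" and e': "\<And>x y. ip2 x y = k' * ip3 (g *v x) (g *v y)"
    using assms(2) unfolding iso_scal_def by blast
  have "ip1 x y = (k*k') * ip3 ((g ** f) *v x) ((g ** f) *v y)" for x y
    by (simp add: e e' matrix_vector_mul_assoc)
  then show ?thesis unfolding iso_scal_def using k k' aut_mult[OF g f]
    by (intro exI[of _ "k*k'"]) auto
qed

lemma class_eq:
  assumes "iso_scal br ip1 ip2"
  shows "ip_class br ip1 = ip_class br ip2"
  unfolding ip_class_def using assms iso_sym iso_trans by blast

lemma vec3_decomp:
  fixes x :: "real^3"
  shows "x = x$1 *\<^sub>R axis 1 1 + x$2 *\<^sub>R axis 2 1 + x$3 *\<^sub>R axis 3 1"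
  unfolding vec_eq_iff forall_3 by (simp add: axis_def)

lemma bil_expand:
  fixes ip :: "real^3 \<Rightarrow> real^3 \<Rightarrow> real"
  assumes b: "bilinear ip"
  defines "M \<equiv> \<lambda>i j. ip (axis i 1) (axis j 1)"
  shows "ip x y = x$1*y$1*M 1 1 + x$1*y$2*M 1 2 + x$1*y$3*M 1 3
               + x$2*y$1*M 2 1 + x$2*y$2*M 2 2 + x$2*y$3*M 2 3
               + x$3*y$1*M 3 1 + x$3*y$2*M 3 2 + x$3*y$3*M 3 3"
proof -
  have "ip x y = ip (x$1 *\<^sub>R axis 1 1 + x$2 *\<^sub>R axis 2 1 + x$3 *\<^sub>R axis 3 1)
                 (y$1 *\<^sub>R axis 1 1 + y$2 *\<^sub>R axis 2 1 + y$3 *\<^sub>R axis 3 1)"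
    using vec3_decomp[of x] vec3_decomp[of y] by simp
  then show ?thesis
    by (simp add: bilinear_ladd[OF b] bilinear_radd[OF b] bilinear_lmul[OF b] bilinear_rmul[OF b] M_def algebra_simps)
qed

lemma ip_pos_vec:
  assumes "inner_prod ip" "v \<noteq> 0"
  shows "ip v v > 0"
  using assms unfolding inner_prod_def by blast

lemma chol:
  fixes ip :: "real^3 \<Rightarrow> real^3 \<Rightarrow> real"
  assumes ipr: "inner_prod ip"
  shows "\<exists>u11 u21 u22 u31 u32 u33. u11 > 0 \<and> u22 > 0 \<and> u33 > 0 \<and>
     (\<forall>x y. ip x y = (u11*x$1)*(u11*y$1) + (u21*x$1+u22*x$2)*(u21*y$1+u22*y$2)
                  + (u31*x$1+u32*x$2+u33*x$3)*(u31*y$1+u32*y$2+u33*y$3))"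
proof -
  have b: "bilinear ip" and sym: "\<And>x y. ip x y = ip y x" using ipr by (auto simp: inner_prod_def)
  define M where "M \<equiv> \<lambda>i j. ip (axis i 1) (axis j 1)"
  have E: "\<And>x y. ip x y = x$1*y$1*M 1 1 + x$1*y$2*M 1 2 + x$1*y$3*M 1 3
               + x$2*y$1*M 2 1 + x$2*y$2*M 2 2 + x$2*y$3*M 2 3
               + x$3*y$1*M 3 1 + x$3*y$2*M 3 2 + x$3*y$3*M 3 3"
    using bil_expand[OF b] unfolding M_def by blast
  have S: "M 2 1 = M 1 2" "M 3 1 = M 1 3" "M 3 2 = M 2 3" unfolding M_def using sym by auto
  have Q: "\<And>w::real^3. w \<noteq> 0 \<Longrightarrow> 0 < w$1*w$1*M 1 1 + 2*w$1*w$2*M 1 2 + 2*w$1*w$3*M 1 3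
               + w$2*w$2*M 2 2 + 2*w$2*w$3*M 2 3 + w$3*w$3*M 3 3"
  proof -
    fix w :: "real^3" assume "w \<noteq> 0"
    then have "ip w w > 0" using ipr ip_pos_vec by blast
    then show "0 < w$1*w$1*M 1 1 + 2*w$1*w$2*M 1 2 + 2*w$1*w$3*M 1 3
               + w$2*w$2*M 2 2 + 2*w$2*w$3*M 2 3 + w$3*w$3*M 3 3"
      unfolding E[of w w] S by (simp add: algebra_simps)
  qed
  have v3: "(vector [0,0,1] :: real^3) \<noteq> 0" by (simp add: vec_eq_iff forall_3)
  have p3: "M 3 3 > 0" using Q[OF v3] by simp
  define u33 where "u33 = sqrt (M 3 3)"
  define u32 where "u32 = M 2 3 / u33"
  define u31 where "u31 = M 1 3 / u33"
  have u33p: "u33 > 0" using p3 by (simp add: u33_def)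
  have u33s: "u33*u33 = M 3 3" using p3 by (simp add: u33_def)
  have e32: "u32*u33 = M 2 3" "u31*u33 = M 1 3" using u33p by (auto simp: u32_def u31_def)
  have v2: "(vector [0,1,-u32/u33] :: real^3) \<noteq> 0" by (simp add: vec_eq_iff forall_3)
  have p2: "M 2 2 - u32*u32 > 0"
  proof -
    have "0 < M 2 2 + 2*(-u32/u33)*M 2 3 + (-u32/u33)*(-u32/u33)*M 3 3"
      using Q[OF v2] by simp
    also have "\<dots> = M 2 2 - u32*u32"
      using u33p by (simp add: flip: u33s e32 add: field_simps power2_eq_square)
    finally show ?thesis .
  qed
  define u22 where "u22 = sqrt (M 2 2 - u32*u32)"
  define u21 where "u21 = (M 1 2 - u31*u32) / u22"
  have u22p: "u22 > 0" using p2 by (simp add: u22_def)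
  have u22s: "u22*u22 + u32*u32 = M 2 2" using p2 by (simp add: u22_def)
  have e21: "u21*u22 + u31*u32 = M 1 2" using u22p by (simp add: u21_def)
  define t where "t = (u32*u21/u22 - u31)/u33"
  have v1: "(vector [1,-u21/u22,t] :: real^3) \<noteq> 0" by (simp add: vec_eq_iff forall_3)
  have p1: "M 1 1 - u21*u21 - u31*u31 > 0"
  proof -
    have "0 < M 1 1 + 2*(-u21/u22)*M 1 2 + 2*t*M 1 3 + (-u21/u22)*(-u21/u22)*M 2 2
              + 2*(-u21/u22)*t*M 2 3 + t*t*M 3 3"
      using Q[OF v1] by simp
    also have "\<dots> = M 1 1 - u21*u21 - u31*u31"
      using u33p u22p by (simp add: flip: u33s e32 u22s e21 add: t_def field_simps power2_eq_square)
    finally show ?thesis .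
  qed
  define u11 where "u11 = sqrt (M 1 1 - u21*u21 - u31*u31)"
  have u11p: "u11 > 0" using p1 by (simp add: u11_def)
  have u11s: "u11*u11 + u21*u21 + u31*u31 = M 1 1" using p1 by (simp add: u11_def)
  show ?thesis
  proof (intro exI conjI allI)
    fix x y :: "real^3"
    show "ip x y = (u11*x$1)*(u11*y$1) + (u21*x$1+u22*x$2)*(u21*y$1+u22*y$2)
                  + (u31*x$1+u32*x$2+u33*x$3)*(u31*y$1+u32*y$2+u33*y$3)"
      unfolding E S by (simp add: flip: u33s e32 u22s e21 u11s add: algebra_simps)
  qed (fact u11p u22p u33p)+
qed


lemma mv3: "((A::real^3^3) *v x)$i = A$i$1*x$1 + A$i$2*x$2 + A$i$3*x$3"
  by (simp add: matrix_vector_mult_def sum_3)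

lemma inner3: "(x::real^3) \<bullet> y = x$1*y$1 + x$2*y$2 + x$3*y$3"
  by (simp add: inner_vec_def sum_3)

lemma scaleR_mv: "((c::real) *\<^sub>R (A::real^3^3)) *v x = c *\<^sub>R (A *v x)"
  by (simp add: vec_eq_iff matrix_vector_mult_def sum_distrib_left algebra_simps)

lemma act_inner_prod:
  fixes h :: "real^3^3"
  assumes "invertible h"
  shows "inner_prod (act h ip0)"
proof -
  let ?B = "matrix_inv h"
  note mp = minv_props[OF assms]
  have lin: "linear (\<lambda>y. (?B *v x) \<bullet> (?B *v y))" for x
    by (rule linearI) (simp_all add: matrix_vector_right_distrib inner_add_right matrix_vector_mult_scaleR)
  have lin2: "linear (\<lambda>x. (?B *v x) \<bullet> (?B *v y))" for y
    by (rule linearI) (simp_all add: matrix_vector_right_distrib inner_add_left matrix_vector_mult_scaleR)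
  have pos: "(?B *v x) \<bullet> (?B *v x) > 0" if "x \<noteq> 0" for x
  proof -
    have "h *v (?B *v x) = x" by (simp add: matrix_vector_mul_assoc mp)
    then have "?B *v x \<noteq> 0" using that by auto
    then show ?thesis by simp
  qed
  show ?thesis unfolding inner_prod_def act_def ip0_def bilinear_def
    using lin lin2 pos by (simp add: inner_commute)
qed

theorem lemma3p7:
  fixes br :: "real^3 \<Rightarrow> real^3 \<Rightarrow> real^3"
  assumes "lie_bracket br"
    and "setF \<subseteq> scal_aut br"
  shows "PM br = {ip_class br (act h ip0) | h. h \<in> setL'}"
proof (intro set_eqI iffI)
  fix X assume "X \<in> {ip_class br (act h ip0) | h. h \<in> setL'}"
  then obtain h where hL: "h \<in> setL'" and X: "X = ip_class br (act h ip0)" by blast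
  obtain a32 a33 where a33: "a33 > 0" and hdef: "h = vector [vector [1, 0, 0], vector [0, 1, 0], vector [0, a32, a33]]"
    using hL unfolding setL'_def by blast
  let ?B = "vector [vector [1, 0, 0], vector [0, 1, 0], vector [0, -a32/a33, 1/a33]] :: real^3^3"
  have "h ** ?B = mat 1" "?B ** h = mat 1" using a33
    by (simp_all add: hdef vec_eq_iff forall_3 matrix_matrix_mult_def sum_3 mat_def field_simps)
  then have "invertible h" unfolding invertible_def by blast
  then show "X \<in> PM br" unfolding X PM_def using act_inner_prod by blast
next
  fix X assume "X \<in> PM br"
  then obtain ip where ipr: "inner_prod ip" and X: "X = ip_class br ip" unfolding PM_def by blast
  obtain u11 u21 u22 u31 u32 u33 where p: "u11 > 0" "u22 > 0" "u33 > 0" and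
    U: "\<And>x y. ip x y = (u11*x$1)*(u11*y$1) + (u21*x$1+u22*x$2)*(u21*y$1+u22*y$2)
                  + (u31*x$1+u32*x$2+u33*x$3)*(u31*y$1+u32*y$2+u33*y$3)"
    using chol[OF ipr] by blast
  define b32 where "b32 = u32/u22"
  define b33 where "b33 = u33/u22"
  define y31 where "y31 = (u31 - b32*u21)/b33"
  have b33p: "b33 > 0" using p by (simp add: b33_def)
  define \<phi> where "\<phi> = (vector [vector [u11, 0, 0], vector [u21, u22, 0], vector [y31, 0, u22]] :: real^3^3)"
  define B where "B = (vector [vector [1, 0, 0], vector [0, 1, 0], vector [0, b32, b33]] :: real^3^3)"
  define h where "h = (vector [vector [1, 0, 0], vector [0, 1, 0], vector [0, -b32/b33, 1/b33]] :: real^3^3)"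
  have "\<phi> \<in> setF" unfolding setF_def \<phi>_def using p by blast
  with assms(2) obtain c f where c: "c \<noteq> 0" and f: "f \<in> lie_aut br" and \<phi>f: "\<phi> = c *\<^sub>R f"
    unfolding scal_aut_def by blast
  have hL: "h \<in> setL'" unfolding setL'_def h_def using b33p by (intro CollectI exI[of _ "-b32/b33"] exI[of _ "1/b33"]) simp
  have "h ** B = mat 1" "B ** h = mat 1" using b33p
    by (simp_all add: h_def B_def vec_eq_iff forall_3 matrix_matrix_mult_def sum_3 mat_def field_simps)
  then have hB: "matrix_inv h = B" by (rule minv_unique)
  have key: "ip x y = (B *v (\<phi> *v x)) \<bullet> (B *v (\<phi> *v y))" for x y
    using p b33p unfolding U inner3 mv3
    by (simp add: B_def \<phi>_def y31_def b32_def b33_def field_simps)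
  have "ip x y = (c*c) * act h ip0 (f *v x) (f *v y)" for x y
    unfolding key act_def ip0_def hB \<phi>f scaleR_mv matrix_vector_mult_scaleR by simp
  moreover have "c * c > 0" using c by (metis not_real_square_gt_zero)
  ultimately have "iso_scal br ip (act h ip0)" unfolding iso_scal_def using f by blast
  then have "X = ip_class br (act h ip0)" using X class_eq by simp
  then show "X \<in> {ip_class br (act h ip0) | h. h \<in> setL'}" using hL by blast
qed

end
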